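(* Let $\gamma:=2\Delta\lambda\max\{\lambda,\mu\}$ and $\nu:=(4\Delta\lambda\gamma)^d$. Then for all $\epsilon\in\mathbb R$, $\mathbf x\in\mathbb R^p$, $\mathbf b,\mathbf b'\in\mathbb R^V$ and $\mathbf w,\mathbf w'\in\mathbb R^E$ with $0\le\max\{\|\mathbf b-\mathbf b'\|_\infty,\|\mathbf w-\mathbf w'\|_\infty\}\le\epsilon\le1$, $$\|\mathfrak A(\mathbf x,\mathbf w,\mathbf b)-\mathfrak A(\mathbf x,\mathbf w',\mathbf b')\|_\infty\le\nu(\|\mathbf w\|_\infty+1)^d(\|\mathbf x\|_\infty+\|\mathbf b\|_\infty+1)\epsilon.$$
   Context: $\mathfrak A=(V,E,(\mathfrak a_v)_{v\in V})$ is an FNN architecture: $(V,E)$ is a finite dag and each $\mathfrak a_v:\mathbb R\to\mathbb R$ is Lipschitz continuous. Sources are input nodes $X_1,\dots,X_p$, sinks are output nodes $Y_1,\dots,Y_q$. For $\mathbf x\in\mathbb R^p$, $\mathbf w=(w_e)_{e\in E}$, $\mathbf b=(b_v)_{v\in V}$: $f_{\mathfrak A,X_i}=x_i$ and for non-input $v$, $f_{\mathfrak A,v}(\mathbf x,\mathbf w,\mathbf b)=\mathfrak a_v\big(b_v+\sum_{u:uv\in E}f_{\mathfrak A,u}(\mathbf x,\mathbf w,\mathbf b)w_{uv}\big)$; $\mathfrak A(\mathbf x,\mathbf w,\mathbf b)$ is the tuple of values at the outputs. $d$ is the depth of the dag, $\Delta\ge1$ its maximum in-degree, $\lambda\in\mathbb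 N_{>0}$ a Lipschitz constant for all $\mathfrak a_v$, and $\mu=\max_v\lceil|\mathfrak a_v(0)|\rceil$. *)

theory Defs
  imports "HOL-Analysis.Analysis"
begin

definition fnn_arch ::
  "'v set \<Rightarrow> ('v \<times> 'v) set \<Rightarrow> ('v \<Rightarrow> real \<Rightarrow> real) \<Rightarrow> 'v list \<Rightarrow> 'v list \<Rightarrow> bool" where
  "fnn_arch V E a Xs Ys \<longleftrightarrow>
     finite V \<and> E \<subseteq> V \<times> V \<and> acyclic E \<and>
     distinct Xs \<and> set Xs = {v \<in> V. \<not> (\<exists>u. (u, v) \<in> E)} \<and>
     distinct Ys \<and> set Ys = {v \<in> V. \<not> (\<exists>u. (v, u) \<in> E)} \<and>
     (\<forall>v \<in> V. \<exists>C. C-lipschitz_on UNIV (a v))"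

definition fnn_val ::
  "'v set \<Rightarrow> ('v \<times> 'v) set \<Rightarrow> ('v \<Rightarrow> real \<Rightarrow> real) \<Rightarrow> 'v list \<Rightarrow>
   (nat \<Rightarrow> real) \<Rightarrow> ('v \<times> 'v \<Rightarrow> real) \<Rightarrow> ('v \<Rightarrow> real) \<Rightarrow> 'v \<Rightarrow> real" where
  "fnn_val V E a Xs x w b = (THE f.
      (\<forall>v. v \<notin> V \<longrightarrow> f v = 0) \<and>
      (\<forall>i < length Xs. f (Xs ! i) = x i) \<and>
      (\<forall>v \<in> V - set Xs. f v = a v (b v + (\<Sum>u \<in> {u. (u, v) \<in> E}. f u * w (u, v)))))"

definition fnn_out ::
  "'v set \<Rightarrow> ('v \<times> 'v) set \<Rightarrow> ('v \<Rightarrow> real \<Rightarrow> real) \<Rightarrow> 'v list \<Rightarrow> 'v list \<Rightarrow>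
   (nat \<Rightarrow> real) \<Rightarrow> ('v \<times> 'v \<Rightarrow> real) \<Rightarrow> ('v \<Rightarrow> real) \<Rightarrow> real list" where
  "fnn_out V E a Xs Ys x w b = map (fnn_val V E a Xs x w b) Ys"

definition supn :: "'i set \<Rightarrow> ('i \<Rightarrow> real) \<Rightarrow> real" where
  "supn S g = Max (insert 0 ((\<lambda>s. \<bar>g s\<bar>) ` S))"

definition dag_depth :: "('v \<times> 'v) set \<Rightarrow> nat" where
  "dag_depth E = Max {n. E ^^ n \<noteq> {}}"

definition max_indeg :: "'v set \<Rightarrow> ('v \<times> 'v) set \<Rightarrow> nat" where
  "max_indeg V E = Max ((\<lambda>v. card {u. (u, v) \<in> E}) ` V)"

definition act_mu :: "'v set \<Rightarrow> ('v \<Rightarrow> real \<Rightarrow> real) \<Rightarrow> int" where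
  "act_mu V a = Max ((\<lambda>v. \<lceil>\<bar>a v 0\<bar>\<rceil>) ` V)"

end

theory Submission
  imports Defs
begin

definition isval :: "'v set \<Rightarrow> ('v \<times> 'v) set \<Rightarrow> ('v \<Rightarrow> real \<Rightarrow> real) \<Rightarrow> 'v list \<Rightarrow>
   (nat \<Rightarrow> real) \<Rightarrow> ('v \<times> 'v \<Rightarrow> real) \<Rightarrow> ('v \<Rightarrow> real) \<Rightarrow> ('v \<Rightarrow> real) \<Rightarrow> bool" where
  "isval V E a Xs x w b f \<longleftrightarrow> (\<forall>v. v \<notin> V \<longrightarrow> f v = 0) \<and>
      (\<forall>i < length Xs. f (Xs ! i) = x i) \<and>
      (\<forall>v \<in> V - set Xs. f v = a v (b v + (\<Sum>u \<in> {u. (u, v) \<in> E}. f u * w (u, v))))"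

lemma fnn_val_isval_eq: "fnn_val V E a Xs x w b = (THE f. isval V E a Xs x w b f)"
  unfolding fnn_val_def isval_def by simp

definition ht :: "('v \<times> 'v) set \<Rightarrow> 'v \<Rightarrow> nat" where
  "ht E v = Max {n. \<exists>u. (u, v) \<in> E ^^ n}"

lemma path_bound:
  assumes fin: "finite V" and EV: "E \<subseteq> V \<times> V" and acy: "acyclic E" and p: "(u, v) \<in> E ^^ n"
  shows "n \<le> card V"
proof (rule ccontr)
  assume "\<not> n \<le> card V"
  hence nV: "card V < n" by simp
  obtain f where f: "f 0 = u" "f n = v" "\<forall>i<n. (f i, f (Suc i)) \<in> E"
    using p relpow_fun_conv by metis
  have sub: "f ` {0..n} \<subseteq> V"
  proof
    fix y assume "y \<in> f ` {0..n}"
    then obtain i where i: "i \<le> n" "y = f i" by auto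
    show "y \<in> V"
    proof (cases "i < n")
      case True thus ?thesis using f(3) EV i by blast
    next
      case False
      hence "i = Suc (n - 1)" using i nV by simp
      moreover have "n - 1 < n" using nV by simp
      hence "(f (n-1), f (Suc (n-1))) \<in> E" using f(3) by blast
      ultimately have "f i \<in> V" using EV by (metis SigmaD2 subsetD)
      thus ?thesis using i by simp
    qed
  qed
  have "\<not> inj_on f {0..n}"
  proof
    assume "inj_on f {0..n}"
    hence "card (f ` {0..n}) = Suc n" by (simp add: card_image)
    moreover have "card (f ` {0..n}) \<le> card V" using sub fin card_mono by blast
    ultimately show False using nV by simp
  qed
  then obtain i j where ij: "i \<le> n" "j \<le> n" "i < j" "f i = f j"
    unfolding inj_on_def by (metis atLeastAtMost_iff linorder_neq_iff)
  have "(f i, f j) \<in> E ^^ (j - i)"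
    unfolding relpow_fun_conv
    by (rule exI[of _ "\<lambda>k. f (i + k)"]) (use ij f(3) in auto)
  hence "(f i, f i) \<in> E\<^sup>+" using ij trancl_power by (metis zero_less_diff)
  thus False using acy unfolding acyclic_def by blast
qed

lemma depth_fin:
  assumes "finite V" "E \<subseteq> V \<times> V" "acyclic E"
  shows "finite {n. E ^^ n \<noteq> {}}"
proof -
  have "{n. E ^^ n \<noteq> {}} \<subseteq> {..card V}" using path_bound[OF assms] by fastforce
  thus ?thesis using finite_subset by blast
qed

lemma ht_le:
  assumes "finite V" "E \<subseteq> V \<times> V" "acyclic E"
  shows "ht E v \<le> dag_depth E"
proof -
  have sub: "{n. \<exists>u. (u, v) \<in> E ^^ n} \<subseteq> {n. E ^^ n \<noteq> {}}" by auto
  have "(v, v) \<in> E ^^ 0" by simp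
  hence ne: "{n. \<exists>u. (u, v) \<in> E ^^ n} \<noteq> {}" by blast
  show ?thesis unfolding ht_def dag_depth_def using Max_mono[OF sub ne depth_fin[OF assms]] .
qed

lemma ht_edge:
  assumes "finite V" "E \<subseteq> V \<times> V" "acyclic E" "(u, v) \<in> E"
  shows "ht E u < ht E v"
proof -
  have fin: "finite {n. \<exists>t. (t, y) \<in> E ^^ n}" for y
    by (rule finite_subset[OF _ depth_fin[OF assms(1-3)]]) auto
  have "(u, u) \<in> E ^^ 0" by simp
  hence "{n. \<exists>t. (t, u) \<in> E ^^ n} \<noteq> {}" by blast
  hence "ht E u \<in> {n. \<exists>t. (t, u) \<in> E ^^ n}" unfolding ht_def
    by (rule Max_in[OF fin])
  then obtain t where "(t, u) \<in> E ^^ ht E u" by auto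
  hence "(t, v) \<in> E ^^ Suc (ht E u)" using assms(4) relpow_Suc_I by metis
  hence "Suc (ht E u) \<le> ht E v" unfolding ht_def using fin by (intro Max_ge) auto
  thus ?thesis by simp
qed

definition Top :: "'v set \<Rightarrow> ('v \<times> 'v) set \<Rightarrow> ('v \<Rightarrow> real \<Rightarrow> real) \<Rightarrow> 'v list \<Rightarrow>
   (nat \<Rightarrow> real) \<Rightarrow> ('v \<times> 'v \<Rightarrow> real) \<Rightarrow> ('v \<Rightarrow> real) \<Rightarrow> ('v \<Rightarrow> real) \<Rightarrow> 'v \<Rightarrow> real" where
  "Top V E a Xs x w b g v = (if v \<notin> V then 0 else if v \<in> set Xs then x (SOME i. i < length Xs \<and> Xs ! i = v)
     else a v (b v + (\<Sum>u \<in> {u. (u, v) \<in> E}. g u * w (u, v))))"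

lemma Top_agree:
  assumes hte: "\<And>u v. (u, v) \<in> E \<Longrightarrow> ht E u < ht E v"
    and ag: "\<forall>u. ht E u < k \<longrightarrow> g1 u = g2 u" and hv: "ht E v < Suc k"
  shows "Top V E a Xs x w b g1 v = Top V E a Xs x w b g2 v"
proof -
  have "(\<Sum>u \<in> {u. (u, v) \<in> E}. g1 u * w (u, v)) = (\<Sum>u \<in> {u. (u, v) \<in> E}. g2 u * w (u, v))"
    by (rule sum.cong) (use hte ag hv in fastforce)+
  thus ?thesis unfolding Top_def by simp
qed

lemma Top_iter:
  assumes hte: "\<And>u v. (u, v) \<in> E \<Longrightarrow> ht E u < ht E v"
  shows "\<forall>v. ht E v < n \<longrightarrow> (Top V E a Xs x w b ^^ n) g1 v = (Top V E a Xs x w b ^^ n) g2 v"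
proof (induction n)
  case 0 then show ?case by simp
next
  case (Suc n)
  show ?case
  proof (intro allI impI)
    fix v assume hv: "ht E v < Suc n"
    have "Top V E a Xs x w b ((Top V E a Xs x w b ^^ n) g1) v = Top V E a Xs x w b ((Top V E a Xs x w b ^^ n) g2) v"
      by (rule Top_agree[OF hte]) (use Suc.IH hv in auto)
    thus "(Top V E a Xs x w b ^^ Suc n) g1 v = (Top V E a Xs x w b ^^ Suc n) g2 v" by simp
  qed
qed

lemma fix_isval:
  assumes XsV: "set Xs \<subseteq> V" and dist: "distinct Xs"
  shows "isval V E a Xs x w b f \<longleftrightarrow> (\<forall>v. Top V E a Xs x w b f v = f v)"
proof -
  have sel: "(SOME j. j < length Xs \<and> Xs ! j = Xs ! i) = i" if "i < length Xs" for i
  proof (rule some_equality)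
    show "i < length Xs \<and> Xs ! i = Xs ! i" using that by simp
    fix j assume "j < length Xs \<and> Xs ! j = Xs ! i"
    thus "j = i" using dist that nth_eq_iff_index_eq by blast
  qed
  show ?thesis
  proof
    assume iv: "isval V E a Xs x w b f"
    show "\<forall>v. Top V E a Xs x w b f v = f v"
    proof
      fix v
      show "Top V E a Xs x w b f v = f v"
      proof (cases "v \<in> set Xs")
        case True
        then obtain i where i: "i < length Xs" "v = Xs ! i" by (metis in_set_conv_nth)
        thus ?thesis using iv XsV sel[OF i(1)] True unfolding isval_def Top_def by auto
      next
        case False
        thus ?thesis using iv unfolding isval_def Top_def by auto
      qed
    qed
  next
    assume fx: "\<forall>v. Top V E a Xs x w b f v = f v"
    have 1: "\<forall>v. v \<notin> V \<longrightarrow> f v = 0" using fx unfolding Top_def by metis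
    have 2: "\<forall>i < length Xs. f (Xs ! i) = x i"
    proof (intro allI impI)
      fix i assume i: "i < length Xs"
      have "Xs ! i \<in> V" "Xs ! i \<in> set Xs" using XsV i by auto
      thus "f (Xs ! i) = x i" using fx[rule_format, of "Xs ! i"] sel[OF i] unfolding Top_def by simp
    qed
    have 3: "\<forall>v \<in> V - set Xs. f v = a v (b v + (\<Sum>u \<in> {u. (u, v) \<in> E}. f u * w (u, v)))"
      using fx unfolding Top_def by (metis DiffE)
    show "isval V E a Xs x w b f" unfolding isval_def using 1 2 3 by blast
  qed
qed

lemma isval_unique:
  assumes fin: "finite V" and EV: "E \<subseteq> V \<times> V" and acy: "acyclic E"
    and XsV: "set Xs \<subseteq> V" and dist: "distinct Xs"
  shows "\<exists>!f. isval V E a Xs x w b f"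
proof -
  let ?T = "Top V E a Xs x w b"
  let ?d = "dag_depth E"
  have hte: "\<And>u v. (u, v) \<in> E \<Longrightarrow> ht E u < ht E v" using ht_edge[OF fin EV acy] by blast
  have hl: "ht E v < Suc ?d" for v using ht_le[OF fin EV acy, of v] by simp
  have fxp: "(?T ^^ n) f = f" if "\<forall>v. ?T f v = f v" for f n
  proof (induction n)
    case 0 then show ?case by simp
  next
    case (Suc n)
    have "?T f = f" using that by auto
    thus ?case using Suc by simp
  qed
  define f0 where "f0 = (?T ^^ Suc ?d) (\<lambda>_. 0)"
  have "\<forall>v. ?T f0 v = f0 v"
  proof
    fix v
    have "?T f0 = (?T ^^ Suc ?d) (?T (\<lambda>_. 0))" unfolding f0_def by (simp only: funpow_swap1)
    thus "?T f0 v = f0 v" unfolding f0_def using Top_iter[OF hte, of "Suc ?d"] hl by metis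
  qed
  hence ex: "isval V E a Xs x w b f0" using fix_isval[OF XsV dist] by blast
  have "\<forall>g. isval V E a Xs x w b g \<longrightarrow> g = f0"
  proof (intro allI impI)
    fix g assume "isval V E a Xs x w b g"
    hence g: "\<forall>v. ?T g v = g v" using fix_isval[OF XsV dist] by blast
    have f: "\<forall>v. ?T f0 v = f0 v" using ex fix_isval[OF XsV dist] by blast
    show "g = f0"
    proof
      fix v
      have "(?T ^^ Suc ?d) g v = (?T ^^ Suc ?d) f0 v" using Top_iter[OF hte, of "Suc ?d"] hl by blast
      thus "g v = f0 v" using fxp[OF g] fxp[OF f] by metis
    qed
  qed
  thus ?thesis using ex by blast
qed

lemma fnn_val_isval:
  assumes "finite V" "E \<subseteq> V \<times> V" "acyclic E" "set Xs \<subseteq> V" "distinct Xs"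
  shows "isval V E a Xs x w b (fnn_val V E a Xs x w b)"
  unfolding fnn_val_isval_eq using theI'[OF isval_unique[OF assms]] .


lemma mono_bound:
  fixes p q r :: real
  assumes "1 \<le> p" "1 \<le> q" "0 \<le> r" "h \<le> k"
  shows "p ^ h * q ^ h * r \<le> p ^ k * q ^ k * r"
proof -
  have "(p * q) ^ h \<le> (p * q) ^ k"
    by (rule power_increasing) (use assms in \<open>auto intro: one_le_mult_iff[THEN iffD2] simp: mult_ge1_I\<close>)
  thus ?thesis using assms(3) by (simp add: power_mult_distrib[symmetric] mult_right_mono)
qed

lemma one_le_pp:
  fixes p q :: real
  assumes "1 \<le> p" "1 \<le> q"
  shows "1 \<le> p ^ k * q ^ k"
  using assms by (simp add: one_le_power mult_ge1_I)

lemma bounds: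
  fixes f g :: "'v \<Rightarrow> real" and Dl lam m W B X eps :: real
  assumes fin: "finite V" and EV: "E \<subseteq> V \<times> V"
    and hte: "\<And>u v. (u, v) \<in> E \<Longrightarrow> ht E u < ht E v"
    and fv: "isval V E a Xs x w b f" and gv: "isval V E a Xs x w' b' g"
    and src: "\<forall>v\<in>V - set Xs. \<exists>u. (u, v) \<in> E"
    and XsV: "set Xs \<subseteq> V"
    and indeg: "\<forall>v\<in>V. real (card {u. (u, v) \<in> E}) \<le> Dl"
    and lip: "\<forall>v\<in>V. lam-lipschitz_on UNIV (a v)"
    and mu: "\<forall>v\<in>V. \<bar>a v 0\<bar> \<le> m" and lm: "lam \<le> m" and l1: "1 \<le> lam" and D1: "1 \<le> Dl"
    and wW: "\<forall>e\<in>E. \<bar>w e\<bar> \<le> W" and wd: "\<forall>e\<in>E. \<bar>w e - w' e\<bar> \<le> eps"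
    and bB: "\<forall>v\<in>V. \<bar>b v\<bar> \<le> B" and bd: "\<forall>v\<in>V. \<bar>b v - b' v\<bar> \<le> eps"
    and xX: "\<forall>i<length Xs. \<bar>x i\<bar> \<le> X" and e0: "0 \<le> eps" and e1: "eps \<le> 1"
    and W0: "0 \<le> W" and B0: "0 \<le> B" and X0: "0 \<le> X"
  shows "v \<in> V \<Longrightarrow> \<bar>f v\<bar> \<le> (2*Dl*lam*m) ^ ht E v * (W+1) ^ ht E v * (X+B+1) \<and>
     \<bar>f v - g v\<bar> \<le> (4*Dl*lam*(2*Dl*lam*m)) ^ ht E v * (W+1) ^ ht E v * (X+B+1) * eps"
proof (induction "ht E v" arbitrary: v rule: less_induct)
  case (less v)
  define k where "k = ht E v"
  define \<gamma> where "\<gamma> = 2*Dl*lam*m"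
  define K where "K = 4*Dl*lam*\<gamma>"
  define S where "S = X+B+1"
  define c where "c = Dl*lam"
  have c1: "1 \<le> c" unfolding c_def using D1 l1 by (simp add: mult_ge1_I)
  have m1: "1 \<le> m" using lm l1 by simp
  have cm1: "1 \<le> c * m" using c1 m1 by (simp add: mult_ge1_I)
  have g1: "1 \<le> \<gamma>" unfolding \<gamma>_def using cm1 unfolding c_def by (simp add: mult.assoc)
  have g_eq: "\<gamma> = 2 * c * m" unfolding \<gamma>_def c_def by simp
  have K_eq: "K = 4 * c * \<gamma>" unfolding K_def c_def by simp
  have "1 * \<gamma> \<le> (4 * c) * \<gamma>" by (rule mult_right_mono) (use c1 g1 in auto)
  hence gK: "\<gamma> \<le> K" unfolding K_eq by simp
  have S1: "1 \<le> S" unfolding S_def using X0 B0 by simp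
  have W1: "1 \<le> W + 1" using W0 by simp
  show ?case
  proof (cases "v \<in> set Xs")
    case True
    then obtain i where i: "i < length Xs" "v = Xs ! i" by (metis in_set_conv_nth)
    have fx: "f v = x i" "g v = x i" using fv gv i unfolding isval_def by auto
    have "1 * S \<le> (\<gamma> ^ k * (W+1) ^ k) * S"
      by (rule mult_right_mono) (use one_le_pp[OF g1 W1] S1 in auto)
    hence "\<bar>f v\<bar> \<le> \<gamma> ^ k * (W+1) ^ k * S" using fx xX i unfolding S_def using B0 by auto
    moreover have "0 \<le> K ^ k * (W+1) ^ k * S * eps" using g1 gK W1 S1 e0 by simp
    ultimately show ?thesis using fx unfolding k_def \<gamma>_def K_def S_def by simp
  next
    case False
    with less.prems src obtain u0 where "(u0, v) \<in> E" by blast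
    hence "ht E u0 < k" unfolding k_def using hte by blast
    then obtain k' where kk: "k = Suc k'" using less_imp_Suc_add by blast
    define P where "P = {u. (u, v) \<in> E}"
    have PV: "P \<subseteq> V" unfolding P_def using EV by blast
    have finP: "finite P" using finite_subset[OF PV fin] .
    have cardP: "real (card P) \<le> Dl" using indeg less.prems unfolding P_def by blast
    define G where "G = \<gamma> ^ k' * (W+1) ^ k'"
    define H where "H = K ^ k' * (W+1) ^ k'"
    have G1: "1 \<le> G" unfolding G_def by (rule one_le_pp[OF g1 W1])
    have GH: "G \<le> H" unfolding G_def H_def
      by (rule mult_right_mono) (use g1 gK W1 in \<open>auto intro: power_mono\<close>)
    have IHP: "\<bar>f u\<bar> \<le> G * S \<and> \<bar>f u - g u\<bar> \<le> H * S * eps" if u: "u \<in> P" for u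
    proof -
      have uv: "(u, v) \<in> E" "u \<in> V" using u PV unfolding P_def by auto
      have hu: "ht E u < ht E v" using hte uv by blast
      have hk: "ht E u \<le> k'" using hu kk unfolding k_def by simp
      have ih: "\<bar>f u\<bar> \<le> \<gamma> ^ ht E u * (W+1) ^ ht E u * S \<and>
                \<bar>f u - g u\<bar> \<le> K ^ ht E u * (W+1) ^ ht E u * S * eps"
        using less.hyps[OF hu uv(2)] unfolding \<gamma>_def K_def S_def by simp
      have "\<gamma> ^ ht E u * (W+1) ^ ht E u * S \<le> G * S" unfolding G_def
        by (rule mono_bound[OF g1 W1 _ hk]) (use S1 in simp)
      moreover have "K ^ ht E u * (W+1) ^ ht E u * (S * eps) \<le> H * (S * eps)" unfolding H_def
        by (rule mono_bound) (use S1 e0 g1 gK W1 hk in auto)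
      ultimately show ?thesis using ih by (simp add: mult.assoc)
    qed
    define zf where "zf = b v + (\<Sum>u \<in> P. f u * w (u, v))"
    define zg where "zg = b' v + (\<Sum>u \<in> P. g u * w' (u, v))"
    have vV: "v \<in> V - set Xs" using less.prems False by blast
    have fvz: "f v = a v zf" using fv vV unfolding isval_def zf_def P_def by blast
    have gvz: "g v = a v zg" using gv vV unfolding isval_def zg_def P_def by blast
    have lipv: "lam-lipschitz_on UNIV (a v)" using lip less.prems by blast
    have s1: "\<bar>\<Sum>u \<in> P. f u * w (u, v)\<bar> \<le> Dl * (G * S * W)"
    proof -
      have "\<bar>\<Sum>u \<in> P. f u * w (u, v)\<bar> \<le> (\<Sum>u \<in> P. \<bar>f u * w (u, v)\<bar>)" by (rule sum_abs)
      also have "\<dots> \<le> real (card P) * (G * S * W)"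
      proof (rule sum_bounded_above)
        fix u assume u: "u \<in> P"
        have "\<bar>w (u, v)\<bar> \<le> W" using wW u unfolding P_def by blast
        thus "\<bar>f u * w (u, v)\<bar> \<le> G * S * W" unfolding abs_mult
          using IHP[OF u] by (intro mult_mono) auto
      qed
      also have "\<dots> \<le> Dl * (G * S * W)"
        by (rule mult_right_mono[OF cardP]) (use G1 S1 W0 in simp)
      finally show ?thesis .
    qed
    have zfb: "\<bar>zf\<bar> \<le> B + Dl * (G * S * W)" unfolding zf_def using s1 bB less.prems by fastforce
    have "dist (a v zf) (a v 0) \<le> lam * dist zf 0" using lipschitz_onD[OF lipv] by blast
    hence "\<bar>f v\<bar> \<le> \<bar>a v 0\<bar> + lam * \<bar>zf\<bar>" unfolding fvz dist_real_def by simp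
    moreover have "lam * \<bar>zf\<bar> \<le> lam * (B + Dl * (G * S * W))"
      using zfb l1 by (simp add: mult_left_mono)
    ultimately have fvb: "\<bar>f v\<bar> \<le> m + lam * B + c * (G * S * W)"
    proof -
      have "\<bar>a v 0\<bar> \<le> m" using mu less.prems by blast
      moreover have "lam * (B + Dl * (G * S * W)) = lam * B + c * (G * S * W)"
        unfolding c_def by (simp add: algebra_simps)
      ultimately show ?thesis using \<open>\<bar>f v\<bar> \<le> \<bar>a v 0\<bar> + lam * \<bar>zf\<bar>\<close> \<open>lam * \<bar>zf\<bar> \<le> lam * (B + Dl * (G * S * W))\<close> by linarith
    qed
    define Q where "Q = G * S * (W + 1)"
    have "1 * S \<le> (G * (W + 1)) * S" by (rule mult_right_mono) (use G1 W1 S1 mult_ge1_I in auto)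
    hence SQ: "S \<le> Q" unfolding Q_def by (simp add: algebra_simps)
    have Q0: "0 \<le> Q" using SQ S1 by simp
    have a1: "lam * B \<le> m * B" using lm B0 by (simp add: mult_right_mono)
    have a2: "m + m * B \<le> m * S" unfolding S_def using m1 X0 by (simp add: algebra_simps)
    have a3: "m * S \<le> m * Q" using SQ m1 by simp
    have "1 * (m * Q) \<le> c * (m * Q)" by (rule mult_right_mono) (use c1 m1 Q0 in auto)
    hence a4: "m * Q \<le> c * m * Q" by (simp add: mult.assoc)
    have a5: "c * (G * S * W) \<le> c * Q" unfolding Q_def using c1 G1 S1 by simp
    have "1 * (c * Q) \<le> m * (c * Q)" by (rule mult_right_mono) (use c1 m1 Q0 in auto)
    hence a6: "c * Q \<le> c * m * Q" by (simp add: algebra_simps)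
    have tgt1: "\<gamma> ^ k * (W+1) ^ k * S = \<gamma> * Q" unfolding kk Q_def G_def by (simp add: algebra_simps)
    have fv_fin: "\<bar>f v\<bar> \<le> \<gamma> ^ k * (W+1) ^ k * S"
    proof -
      have "\<gamma> * Q = 2 * (c * m * Q)" by (simp add: g_eq algebra_simps)
      thus ?thesis unfolding tgt1 using fvb a1 a2 a3 a4 a5 a6 by linarith
    qed
    have s2: "\<bar>\<Sum>u \<in> P. (f u * w (u, v) - g u * w' (u, v))\<bar> \<le> Dl * (H * S * eps * (W + 1) + G * S * eps)"
    proof -
      have "\<bar>\<Sum>u \<in> P. (f u * w (u, v) - g u * w' (u, v))\<bar> \<le> (\<Sum>u \<in> P. \<bar>f u * w (u, v) - g u * w' (u, v)\<bar>)"
        by (rule sum_abs)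
      also have "\<dots> \<le> real (card P) * (H * S * eps * (W + 1) + G * S * eps)"
      proof (rule sum_bounded_above)
        fix u assume u: "u \<in> P"
        have wu: "\<bar>w (u, v)\<bar> \<le> W" "\<bar>w (u, v) - w' (u, v)\<bar> \<le> eps" using wW wd u unfolding P_def by blast+
        have w'u: "\<bar>w' (u, v)\<bar> \<le> W + 1" using wu e1 by linarith
        have eq: "f u * w (u, v) - g u * w' (u, v) = (f u - g u) * w' (u, v) + f u * (w (u, v) - w' (u, v))"
          by (simp add: algebra_simps)
        have t1: "\<bar>(f u - g u) * w' (u, v)\<bar> \<le> H * S * eps * (W + 1)" unfolding abs_mult
          using IHP[OF u] w'u by (intro mult_mono) auto
        have t2: "\<bar>f u * (w (u, v) - w' (u, v))\<bar> \<le> G * S * eps" unfolding abs_mult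
          using IHP[OF u] wu(2) by (intro mult_mono) auto
        show "\<bar>f u * w (u, v) - g u * w' (u, v)\<bar> \<le> H * S * eps * (W + 1) + G * S * eps"
          unfolding eq using t1 t2 abs_triangle_ineq[of "(f u - g u) * w' (u, v)" "f u * (w (u, v) - w' (u, v))"] by linarith
      qed
      also have "\<dots> \<le> Dl * (H * S * eps * (W + 1) + G * S * eps)"
        by (rule mult_right_mono[OF cardP]) (use G1 GH S1 W1 e0 in simp)
      finally show ?thesis .
    qed
    have "zf - zg = (b v - b' v) + (\<Sum>u \<in> P. (f u * w (u, v) - g u * w' (u, v)))"
      unfolding zf_def zg_def by (simp add: sum_subtractf)
    hence zd: "\<bar>zf - zg\<bar> \<le> eps + Dl * (H * S * eps * (W + 1) + G * S * eps)"
    proof -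
      have "\<bar>b v - b' v\<bar> \<le> eps" using bd less.prems by blast
      thus ?thesis using s2 \<open>zf - zg = _\<close> abs_triangle_ineq[of "b v - b' v" "\<Sum>u \<in> P. (f u * w (u, v) - g u * w' (u, v))"] by linarith
    qed
    have "dist (a v zf) (a v zg) \<le> lam * dist zf zg" using lipschitz_onD[OF lipv] by blast
    hence "\<bar>f v - g v\<bar> \<le> lam * \<bar>zf - zg\<bar>" unfolding fvz gvz dist_real_def by simp
    also have "\<dots> \<le> lam * (eps + Dl * (H * S * eps * (W + 1) + G * S * eps))"
      using zd l1 by (simp add: mult_left_mono)
    finally have fgb: "\<bar>f v - g v\<bar> \<le> lam * eps + c * (H * S * eps * (W + 1)) + c * (G * S * eps)"
      unfolding c_def by (simp add: algebra_simps)
    define R where "R = H * (W + 1) * S * eps"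
    have H1: "1 \<le> H" using G1 GH by simp
    have HWS: "1 \<le> H * (W + 1) * S" using H1 W1 S1 by (simp add: mult_ge1_I)
    have "1 * eps \<le> (H * (W + 1) * S) * eps" by (rule mult_right_mono) (use HWS e0 in auto)
    hence eR: "eps \<le> R" unfolding R_def by simp
    have R0: "0 \<le> R" using eR e0 by simp
    have b1: "lam * eps \<le> c * R"
    proof -
      have "lam * eps \<le> c * eps" unfolding c_def using D1 l1 e0
        by (simp add: mult_right_mono)
      also have "\<dots> \<le> c * R" using eR c1 by simp
      finally show ?thesis .
    qed
    have b2: "c * (H * S * eps * (W + 1)) = c * R" unfolding R_def by (simp add: algebra_simps)
    have "G * S * eps \<le> H * S * eps" using GH S1 e0 by (simp add: mult_right_mono)
    also have "1 * (H * S * eps) \<le> (W + 1) * (H * S * eps)" by (rule mult_right_mono) (use W1 H1 S1 e0 in auto)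
    hence "H * S * eps \<le> R" unfolding R_def by (simp add: algebra_simps)
    finally have b3: "c * (G * S * eps) \<le> c * R" using c1 by simp
    have "3 * (c * R) \<le> (4 * \<gamma>) * (c * R)" by (rule mult_right_mono) (use c1 g1 R0 in auto)
    hence b4: "3 * (c * R) \<le> K * R" unfolding K_eq by (simp add: algebra_simps)
    have tgt2: "K ^ k * (W+1) ^ k * S * eps = K * R" unfolding kk R_def H_def by (simp add: algebra_simps)
    have fg_fin: "\<bar>f v - g v\<bar> \<le> K ^ k * (W+1) ^ k * S * eps"
      unfolding tgt2 using fgb b1 b2 b3 b4 by linarith
    show ?thesis using fv_fin fg_fin unfolding k_def \<gamma>_def K_def S_def by simp
  qed
qed


lemma supn_ge: "finite S \<Longrightarrow> s \<in> S \<Longrightarrow> \<bar>g s\<bar> \<le> supn S g"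
  unfolding supn_def by (rule Max_ge) auto

lemma supn_nonneg: "finite S \<Longrightarrow> 0 \<le> supn S g"
  unfolding supn_def by (rule Max_ge) auto

lemma supn_le: "finite S \<Longrightarrow> 0 \<le> K \<Longrightarrow> (\<And>s. s \<in> S \<Longrightarrow> \<bar>g s\<bar> \<le> K) \<Longrightarrow> supn S g \<le> K"
  unfolding supn_def by (rule Max.boundedI) auto

theorem lemma6p7:
  fixes V :: "'v set" and E :: "('v \<times> 'v) set" and a :: "'v \<Rightarrow> real \<Rightarrow> real"
    and Xs Ys :: "'v list" and lam :: nat
    and eps :: real and x :: "nat \<Rightarrow> real" and b b' :: "'v \<Rightarrow> real"
    and w w' :: "'v \<times> 'v \<Rightarrow> real"
  assumes arch: "fnn_arch V E a Xs Ys"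
    and Delta_ge1: "max_indeg V E \<ge> 1"
    and lam_pos: "lam > 0"
    and lip: "\<forall>v \<in> V. (real lam)-lipschitz_on UNIV (a v)"
    and eps: "0 \<le> max (supn V (\<lambda>v. b v - b' v)) (supn E (\<lambda>e. w e - w' e))"
             "max (supn V (\<lambda>v. b v - b' v)) (supn E (\<lambda>e. w e - w' e)) \<le> eps"
             "eps \<le> 1"
  shows "let d = dag_depth E; \<Delta> = real (max_indeg V E); \<mu> = real_of_int (act_mu V a);
             \<gamma> = 2 * \<Delta> * real lam * max (real lam) \<mu>;
             \<nu> = (4 * \<Delta> * real lam * \<gamma>) ^ d
         in supn {..<length Ys}
              (\<lambda>i. fnn_out V E a Xs Ys x w b ! i - fnn_out V E a Xs Ys x w' b' ! i)
            \<le> \<nu> * (supn E w + 1) ^ d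
                 * (supn {..<length Xs} x + supn V b + 1) * eps"
proof -
  have fin: "finite V" and EV: "E \<subseteq> V \<times> V" and acy: "acyclic E" and dXs: "distinct Xs"
    and sXs: "set Xs = {v \<in> V. \<not> (\<exists>u. (u, v) \<in> E)}"
    and sYs: "set Ys = {v \<in> V. \<not> (\<exists>u. (v, u) \<in> E)}"
    using arch unfolding fnn_arch_def by auto
  have finE: "finite E" using finite_subset[OF EV] fin by blast
  have XsV: "set Xs \<subseteq> V" using sXs by auto
  have src: "\<forall>v\<in>V - set Xs. \<exists>u. (u, v) \<in> E" using sXs by auto
  define d where "d = dag_depth E"
  define Dl where "Dl = real (max_indeg V E)"
  define m where "m = max (real lam) (real_of_int (act_mu V a))"
  define W where "W = supn E w"
  define B where "B = supn V b"
  define X where "X = supn {..<length Xs} x"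
  define f where "f = fnn_val V E a Xs x w b"
  define g where "g = fnn_val V E a Xs x w' b'"
  have fv: "isval V E a Xs x w b f" unfolding f_def by (rule fnn_val_isval[OF fin EV acy XsV dXs])
  have gv: "isval V E a Xs x w' b' g" unfolding g_def by (rule fnn_val_isval[OF fin EV acy XsV dXs])
  have hte: "\<And>u v. (u, v) \<in> E \<Longrightarrow> ht E u < ht E v" using ht_edge[OF fin EV acy] by blast
  have indeg: "\<forall>v\<in>V. real (card {u. (u, v) \<in> E}) \<le> Dl"
    unfolding Dl_def max_indeg_def using fin by (auto intro: Max_ge)
  have mu: "\<forall>v\<in>V. \<bar>a v 0\<bar> \<le> m"
  proof
    fix v assume v: "v \<in> V"
    have "\<lceil>\<bar>a v 0\<bar>\<rceil> \<le> act_mu V a" unfolding act_mu_def using fin v by (auto intro: Max_ge)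
    hence "\<bar>a v 0\<bar> \<le> real_of_int (act_mu V a)"
      by (meson le_of_int_ceiling of_int_le_iff order_trans)
    thus "\<bar>a v 0\<bar> \<le> m" unfolding m_def by linarith
  qed
  have lm: "real lam \<le> m" unfolding m_def by simp
  have l1: "1 \<le> real lam" using lam_pos by simp
  have D1: "1 \<le> Dl" unfolding Dl_def using Delta_ge1 by simp
  have e0: "0 \<le> eps" using eps(1,2) by linarith
  have wW: "\<forall>e\<in>E. \<bar>w e\<bar> \<le> W" unfolding W_def using supn_ge[OF finE] by blast
  have bB: "\<forall>v\<in>V. \<bar>b v\<bar> \<le> B" unfolding B_def using supn_ge[OF fin] by blast
  have xX: "\<forall>i<length Xs. \<bar>x i\<bar> \<le> X" unfolding X_def using supn_ge[of "{..<length Xs}"] by auto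
  have wd: "\<forall>e\<in>E. \<bar>w e - w' e\<bar> \<le> eps"
    using supn_ge[OF finE, of _ "\<lambda>e. w e - w' e"] eps(2) by fastforce
  have bd: "\<forall>v\<in>V. \<bar>b v - b' v\<bar> \<le> eps"
    using supn_ge[OF fin, of _ "\<lambda>v. b v - b' v"] eps(2) by fastforce
  have W0: "0 \<le> W" unfolding W_def by (rule supn_nonneg[OF finE])
  have B0: "0 \<le> B" unfolding B_def by (rule supn_nonneg[OF fin])
  have X0: "0 \<le> X" unfolding X_def by (rule supn_nonneg) simp
  define K where "K = 4 * Dl * real lam * (2 * Dl * real lam * m)"
  have m1: "1 \<le> m" using lm l1 by simp
  have K1: "1 \<le> K" unfolding K_def using D1 l1 m1
    by (simp add: mult_ge1_I)
  have main: "v \<in> V \<Longrightarrow> \<bar>f v - g v\<bar> \<le> K ^ d * (W+1) ^ d * (X+B+1) * eps" for v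
  proof -
    assume v: "v \<in> V"
    have "\<bar>f v - g v\<bar> \<le> K ^ ht E v * (W+1) ^ ht E v * (X+B+1) * eps"
      using bounds[OF fin EV hte fv gv src XsV indeg lip mu lm l1 D1 wW wd bB bd xX e0 eps(3) W0 B0 X0 v]
      unfolding K_def by blast
    also have "\<dots> \<le> K ^ d * (W+1) ^ d * (X+B+1) * eps"
      using mono_bound[OF K1 _ _ ht_le[OF fin EV acy, of v], of "W+1" "(X+B+1)*eps"] W0 X0 B0 e0
      unfolding d_def by (simp add: mult.assoc)
    finally show ?thesis .
  qed
  have "supn {..<length Ys} (\<lambda>i. fnn_out V E a Xs Ys x w b ! i - fnn_out V E a Xs Ys x w' b' ! i)
        \<le> K ^ d * (W+1) ^ d * (X+B+1) * eps"
  proof (rule supn_le)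
    show "0 \<le> K ^ d * (W + 1) ^ d * (X + B + 1) * eps" using K1 W0 X0 B0 e0 by simp
    fix i assume i: "i \<in> {..<length Ys}"
    have "Ys ! i \<in> V" using i sYs nth_mem by fastforce
    thus "\<bar>fnn_out V E a Xs Ys x w b ! i - fnn_out V E a Xs Ys x w' b' ! i\<bar> \<le> K ^ d * (W + 1) ^ d * (X + B + 1) * eps"
      using main i unfolding fnn_out_def f_def g_def by simp
  qed simp
  thus ?thesis unfolding Let_def K_def d_def Dl_def m_def W_def X_def B_def by simp
qed

end
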